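(* Let $G$ be a networked timed DES and let $\tilde{G}$ be its communication automaton, as defined in the context. Then $\psi(\mathcal{L}(\tilde{G}))=\mathcal{L}(G)$.
   Context: A timed automaton is $G=(Q,\tilde{\Sigma},\delta,\Gamma,q_0,Q_m)$ with finite state set $Q$, finite event set $\tilde{\Sigma}=\Sigma\cup\{tick\}$ ($tick$ denotes the elapse of one unit of time), partial transition function $\delta:Q\times\tilde{\Sigma}\to Q$ (extended to strings in the usual way), active event function $\Gamma$, initial state $q_0$ and marked states $Q_m$; $\mathcal{L}(G)=\{s:\delta(q_0,s)\text{ is defined}\}$, $\mathcal{L}_m(G)=\{s:\delta(q_0,s)\in Q_m\}$. Standing assumptions: there is a set $\Sigma_{for}\subseteq\Sigma$ of enforceable events; for all $q$ and all nonempty $s\in\Sigma^*$, $\delta(q,s)\neq q$; every state has at least one defined transition; and for every $s\in\mathcal{L}(G)$ with $s\,tick\notin\mathcal{L}(G)$ there is $\sigma\in\Sigma_{for}$ with $s\sigma\in\mathcal{L}(G)$. The system is $G=G_1\|\cdots\|G_n$ (parallel composition) where $G_i$ has event set $\tilde{\Sigma}_i$ and $\tilde{\Sigma}_i\cap\tilde{\Sigma}_j=\{tick\}$ for $i\neq j$; $\mathcal{A}=\{1,\dots,n\}$ indexes supervisors, supervisor $i$ having observable events $\tilde{\Sigma}_{o,i}\subseteq\tilde{\Sigma}_i$. Communication: a Boolean matrix $\mathbf{COM}\in\{0,1\}^{n\times n}$ with $\mathbf{COM}_{ii}=0$. For each $(i,j)$ with $\mathbf{COM}_{ij}=1$ there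 is a channel $\mathbf{CH}_{ij}$ from supervisor $i$ to supervisor $j$, a set $\Sigma_{ij}\subseteq\tilde{\Sigma}_{o,i}\setminus\{tick\}$ of events communicated from $i$ to $j$, a subset $\Sigma_{L,ij}\subseteq\Sigma_{ij}$ of events that may be lost, and a delay bound $N_{ij}\in\mathbb{N}$ (in $tick$s); channels are FIFO. For $\mathbf{COM}_{ij}=0$ put $\Sigma_{ij}=\emptyset$. A configuration of $\mathbf{CH}_{ij}$ is a finite sequence $\theta_{ij}=(\sigma_1,n_1)\cdots(\sigma_k,n_k)$ with $\sigma_d\in\Sigma_{ij}$, $n_d\in\{0,\dots,N_{ij}\}$ (number of $tick$s since $\sigma_d$ entered the channel); $\theta_{ij}=\varepsilon$ whenever $\mathbf{COM}_{ij}=0$. A channel state is the tuple $\bar\theta=(\theta_{ij})_{i,j\in\mathcal{A}}$. Let $\mathbf{MAX}(\theta_{ij})=n_1$ if $\theta_{ij}\neq\varepsilon$ and $0$ otherwise; $\varepsilon^+=\varepsilon$ and $((\sigma_1,n_1)\cdots(\sigma_k,n_k))^+=(\sigma_1,n_1+1)\cdots(\sigma_k,n_k+1)$. Operators: $\mathbf{TIME}(\bar\theta)=(\theta_{ij}^+)_{i,j}$, defined iff $\mathbf{MAX}(\theta_{ij}^+)\le N_{ij}$ for all $i,j$; for $\sigma\in\Sigma$, $\mathbf{IN}(\bar\theta,\sigma)$ replaces $\theta_{ij}$ by $\theta_{ij}(\sigma,0)$ for every $(i,j)$ with $\sigma\in\Sigma_{ij}$ and leaves the other components unchanged; for $\sigma\in\Sigma_{ij}$,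 $\mathbf{OUT}_{ij}(\bar\theta,\sigma)$ is defined iff $\theta_{ij}=(\sigma_1,n_1)\cdots(\sigma_k,n_k)\neq\varepsilon$ with $\sigma_1=\sigma$, and then removes $(\sigma_1,n_1)$ from $\theta_{ij}$; for $d\in\mathbb{N}$, $\mathbf{LOSS}_{ij}(\bar\theta,d)$ is defined iff $\theta_{ij}=(\sigma_1,n_1)\cdots(\sigma_k,n_k)\neq\varepsilon$, $d\le k$ and $\sigma_d\in\Sigma_{L,ij}$, and then removes the $d$th pair from $\theta_{ij}$. Fresh events: $f_{ij}(\sigma)$ for $\sigma\in\Sigma_{ij}$ (the first event $\sigma$ in $\mathbf{CH}_{ij}$ is delivered), forming $\Sigma^f$, and $g_{ij}(d)$ for $d\in\mathbb{N}$ (the $d$th event in $\mathbf{CH}_{ij}$ is lost), forming $\Sigma^g$; $f_{ij},g_{ij}$ are injective with pairwise disjoint images. The communication automaton $\tilde{G}$ is the accessible part of the automaton with states $(q,\bar\theta)$, event set $\tilde{E}\subseteq\tilde{\Sigma}\cup\Sigma^f\cup\Sigma^g$, initial state $(q_0,(\varepsilon)_{i,j})$, marked states $\{(q,\bar\theta):q\in Q_m\}$, and transition function $\tilde\delta$: $\tilde\delta((q,\bar\theta),tick)=(\delta(q,tick),\mathbf{TIME}(\bar\theta))$ if both are defined; $\tilde\delta((q,\bar\theta),\sigma)=(\delta(q,\sigma),\mathbf{IN}(\bar\theta,\sigma))$ for $\sigma\in\Sigma$ if $\delta(q,\sigma)$ is defined; $\tilde\delta((q,\bar\theta),f_{ij}(\sigma))=(q,\mathbf{OUT}_{ij}(\bar\theta,\sigma))$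 if defined; $\tilde\delta((q,\bar\theta),g_{ij}(d))=(q,\mathbf{LOSS}_{ij}(\bar\theta,d))$ if defined; undefined otherwise. For a string $\mu$ over $\tilde E$, $\psi(\mu)$ is obtained by deleting all events of $\Sigma^f\cup\Sigma^g$; $\psi(L)=\{\psi(\mu):\mu\in L\}$. *)

theory Defs
  imports Main
begin

datatype 'a tevent = Tick | Ev 'a

text \<open>A timed automaton (Q, Sigma + tick, delta, Gamma, q0, Qm). The component evs is the
  set Sigma of non-tick events; the full event set is tick plus Ev of evs.
  The active event function Gamma is determined by delta (see active).\<close>
record ('q, 'a) ta =
  states :: "'q set"
  evs    :: "'a set"
  trans  :: "'q \<Rightarrow> 'a tevent \<Rightarrow> 'q option"
  init   :: 'q
  marked :: "'q set"

fun deltas :: "('q \<Rightarrow> 'e \<Rightarrow> 'q option) \<Rightarrow> 'q \<Rightarrow> 'e list \<Rightarrow> 'q option" where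
  "deltas d q [] = Some q"
| "deltas d q (e # s) = (case d q e of None \<Rightarrow> None | Some q' \<Rightarrow> deltas d q' s)"

definition alph :: "('q, 'a) ta \<Rightarrow> 'a tevent set" where
  "alph G = insert Tick (Ev ` evs G)"

definition active :: "('q, 'a) ta \<Rightarrow> 'q \<Rightarrow> 'a tevent set" where
  "active G q = {e. trans G q e \<noteq> None}"

definition lang :: "('q, 'a) ta \<Rightarrow> 'a tevent list set" where
  "lang G = {s. deltas (trans G) (init G) s \<noteq> None}"

definition mlang :: "('q, 'a) ta \<Rightarrow> 'a tevent list set" where
  "mlang G = {s. \<exists>q. deltas (trans G) (init G) s = Some q \<and> q \<in> marked G}"

definition wf_ta :: "('q, 'a) ta \<Rightarrow> bool" where
  "wf_ta G \<longleftrightarrow> finite (states G) \<and> finite (evs G) \<and> init G \<in> states G \<and>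
     marked G \<subseteq> states G \<and>
     (\<forall>q e. q \<notin> states G \<longrightarrow> trans G q e = None) \<and>
     (\<forall>q e q'. trans G q e = Some q' \<longrightarrow> q' \<in> states G \<and> e \<in> alph G)"

definition standing_assms :: "('q, 'a) ta \<Rightarrow> 'a set \<Rightarrow> bool" where
  "standing_assms G Sfor \<longleftrightarrow>
     Sfor \<subseteq> evs G \<and>
     (\<forall>q \<in> states G. \<forall>s. s \<noteq> [] \<and> set s \<subseteq> Ev ` evs G \<longrightarrow> deltas (trans G) q s \<noteq> Some q) \<and>
     (\<forall>q \<in> states G. active G q \<noteq> {}) \<and>
     (\<forall>s \<in> lang G. s @ [Tick] \<notin> lang G \<longrightarrow> (\<exists>\<sigma> \<in> Sfor. s @ [Ev \<sigma>] \<in> lang G))"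

definition in_comp :: "nat \<Rightarrow> (nat \<Rightarrow> ('q, 'a) ta) \<Rightarrow> 'a tevent \<Rightarrow> bool" where
  "in_comp n Gs e \<longleftrightarrow> (\<exists>i<n. e \<in> alph (Gs i))"

definition par_trans :: "nat \<Rightarrow> (nat \<Rightarrow> ('q, 'a) ta) \<Rightarrow> 'q list \<Rightarrow> 'a tevent \<Rightarrow> 'q list option" where
  "par_trans n Gs xs e =
     (if length xs = n \<and> in_comp n Gs e \<and>
         (\<forall>i<n. e \<in> alph (Gs i) \<longrightarrow> trans (Gs i) (xs ! i) e \<noteq> None)
      then Some (map (\<lambda>i. if e \<in> alph (Gs i) then the (trans (Gs i) (xs ! i) e) else xs ! i) [0..<n])
      else None)"

definition par_init :: "nat \<Rightarrow> (nat \<Rightarrow> ('q, 'a) ta) \<Rightarrow> 'q list" where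
  "par_init n Gs = map (\<lambda>i. init (Gs i)) [0..<n]"

definition par_reach :: "nat \<Rightarrow> (nat \<Rightarrow> ('q, 'a) ta) \<Rightarrow> 'q list set" where
  "par_reach n Gs = {xs. \<exists>s. deltas (par_trans n Gs) (par_init n Gs) s = Some xs}"

definition par :: "nat \<Rightarrow> (nat \<Rightarrow> ('q, 'a) ta) \<Rightarrow> ('q list, 'a) ta" where
  "par n Gs = \<lparr> states = par_reach n Gs,
                evs = (\<Union>i<n. evs (Gs i)),
                trans = (\<lambda>xs e. if xs \<in> par_reach n Gs then par_trans n Gs xs e else None),
                init = par_init n Gs,
                marked = {xs \<in> par_reach n Gs. \<forall>i<n. xs ! i \<in> marked (Gs i)} \<rparr>"

text \<open>A channel state assigns to every pair (i,j) a configuration (list of pairs (event, age)).\<close>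
type_synonym 'a chstate = "nat \<Rightarrow> nat \<Rightarrow> ('a \<times> nat) list"

definition MAXage :: "('a \<times> nat) list \<Rightarrow> nat" where
  "MAXage th = (case th of [] \<Rightarrow> 0 | p # _ \<Rightarrow> snd p)"

definition incr :: "('a \<times> nat) list \<Rightarrow> ('a \<times> nat) list" where
  "incr th = map (\<lambda>(\<sigma>, k). (\<sigma>, Suc k)) th"

definition TIME :: "nat \<Rightarrow> (nat \<Rightarrow> nat \<Rightarrow> nat) \<Rightarrow> 'a chstate \<Rightarrow> 'a chstate option" where
  "TIME n N th = (if \<forall>i<n. \<forall>j<n. MAXage (incr (th i j)) \<le> N i j
                  then Some (\<lambda>i j. incr (th i j)) else None)"

definition IN :: "(nat \<Rightarrow> nat \<Rightarrow> 'a set) \<Rightarrow> 'a chstate \<Rightarrow> 'a \<Rightarrow> 'a chstate" where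
  "IN Sig th \<sigma> = (\<lambda>i j. if \<sigma> \<in> Sig i j then th i j @ [(\<sigma>, 0)] else th i j)"

definition OUT :: "nat \<Rightarrow> nat \<Rightarrow> 'a chstate \<Rightarrow> 'a \<Rightarrow> 'a chstate option" where
  "OUT i j th \<sigma> = (if th i j \<noteq> [] \<and> fst (hd (th i j)) = \<sigma>
                    then Some (th(i := (th i)(j := tl (th i j)))) else None)"

text \<open>Loss of the d-th (1-based) pair.\<close>
definition LOSS :: "(nat \<Rightarrow> nat \<Rightarrow> 'a set) \<Rightarrow> nat \<Rightarrow> nat \<Rightarrow> 'a chstate \<Rightarrow> nat \<Rightarrow> 'a chstate option" where
  "LOSS SigL i j th d = (if th i j \<noteq> [] \<and> 1 \<le> d \<and> d \<le> length (th i j) \<and> fst (th i j ! (d - 1)) \<in> SigL i j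
                         then Some (th(i := (th i)(j := take (d - 1) (th i j) @ drop d (th i j)))) else None)"

text \<open>Events of the communication automaton: plant events, deliveries f_ij(sigma), losses g_ij(d).
  Using constructors makes f_ij, g_ij injective with pairwise disjoint images.\<close>
datatype 'a cevent = PEv "'a tevent" | Fdel nat nat 'a | Gloss nat nat nat

definition comm_trans ::
  "('q, 'a) ta \<Rightarrow> nat \<Rightarrow> (nat \<Rightarrow> nat \<Rightarrow> 'a set) \<Rightarrow> (nat \<Rightarrow> nat \<Rightarrow> 'a set) \<Rightarrow> (nat \<Rightarrow> nat \<Rightarrow> nat)
   \<Rightarrow> 'q \<times> 'a chstate \<Rightarrow> 'a cevent \<Rightarrow> ('q \<times> 'a chstate) option" where
  "comm_trans G n Sig SigL N x e = (case x of (q, th) \<Rightarrow>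
     (case e of
        PEv Tick \<Rightarrow> (case (trans G q Tick, TIME n N th) of
                      (Some q', Some th') \<Rightarrow> Some (q', th') | _ \<Rightarrow> None)
      | PEv (Ev \<sigma>) \<Rightarrow> (case trans G q (Ev \<sigma>) of
                      Some q' \<Rightarrow> Some (q', IN Sig th \<sigma>) | None \<Rightarrow> None)
      | Fdel i j \<sigma> \<Rightarrow> (if i < n \<and> j < n \<and> \<sigma> \<in> Sig i j
                      then map_option (\<lambda>th'. (q, th')) (OUT i j th \<sigma>) else None)
      | Gloss i j d \<Rightarrow> (if i < n \<and> j < n
                      then map_option (\<lambda>th'. (q, th')) (LOSS SigL i j th d) else None)))"

definition comm_init :: "('q, 'a) ta \<Rightarrow> 'q \<times> 'a chstate" where
  "comm_init G = (init G, (\<lambda>i j. []))"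

text \<open>Language of the communication automaton (taking the accessible part does not change it).\<close>
definition comm_lang ::
  "('q, 'a) ta \<Rightarrow> nat \<Rightarrow> (nat \<Rightarrow> nat \<Rightarrow> 'a set) \<Rightarrow> (nat \<Rightarrow> nat \<Rightarrow> 'a set) \<Rightarrow> (nat \<Rightarrow> nat \<Rightarrow> nat)
   \<Rightarrow> 'a cevent list set" where
  "comm_lang G n Sig SigL N = {mu. deltas (comm_trans G n Sig SigL N) (comm_init G) mu \<noteq> None}"

fun psi :: "'a cevent list \<Rightarrow> 'a tevent list" where
  "psi [] = []"
| "psi (PEv e # mu) = e # psi mu"
| "psi (Fdel i j \<sigma> # mu) = psi mu"
| "psi (Gloss i j d # mu) = psi mu"

text \<open>Components Gs 0..Gs (n-1), enforceable events Sfor, observable sets So,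
  communication matrix COM, communicated events Sig, lossable events SigL, delay bounds N.\<close>
definition networked_tdes ::
  "nat \<Rightarrow> (nat \<Rightarrow> ('q, 'a) ta) \<Rightarrow> 'a set \<Rightarrow> (nat \<Rightarrow> 'a tevent set) \<Rightarrow> (nat \<Rightarrow> nat \<Rightarrow> bool)
   \<Rightarrow> (nat \<Rightarrow> nat \<Rightarrow> 'a set) \<Rightarrow> (nat \<Rightarrow> nat \<Rightarrow> 'a set) \<Rightarrow> (nat \<Rightarrow> nat \<Rightarrow> nat) \<Rightarrow> bool" where
  "networked_tdes n Gs Sfor So COM Sig SigL N \<longleftrightarrow>
     0 < n \<and>
     (\<forall>i<n. wf_ta (Gs i)) \<and>
     (\<forall>i<n. \<forall>j<n. i \<noteq> j \<longrightarrow> evs (Gs i) \<inter> evs (Gs j) = {}) \<and>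
     standing_assms (par n Gs) Sfor \<and>
     (\<forall>i<n. So i \<subseteq> alph (Gs i)) \<and>
     (\<forall>i j. COM i j \<longrightarrow> i < n \<and> j < n) \<and>
     (\<forall>i. \<not> COM i i) \<and>
     (\<forall>i j. \<not> COM i j \<longrightarrow> Sig i j = {}) \<and>
     (\<forall>i j. Ev ` Sig i j \<subseteq> So i) \<and>
     (\<forall>i j. SigL i j \<subseteq> Sig i j)"

end

theory Submission
  imports Defs
begin

lemma deltas_append:
  "deltas d q (a @ b) = (case deltas d q a of None \<Rightarrow> None | Some q' \<Rightarrow> deltas d q' b)"
  by (induction a arbitrary: q) (auto split: option.splits)

lemma psi_append: "psi (a @ b) = psi a @ psi b"
  by (induction a rule: psi.induct) auto

lemma ct_step:
  assumes "comm_trans G n Sig SigL N (q, th) e = Some (q', th')"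
  shows "case e of PEv a \<Rightarrow> trans G q a = Some q' | _ \<Rightarrow> q' = q"
proof (cases e)
  case (PEv x)
  then show ?thesis using assms
    by (cases x) (auto simp: comm_trans_def split: option.splits)
next
  case (Fdel i j s)
  then show ?thesis using assms
    by (auto simp: comm_trans_def split: if_splits)
next
  case (Gloss i j d)
  then show ?thesis using assms
    by (auto simp: comm_trans_def split: if_splits)
qed

lemma sub_dir:
  "deltas (comm_trans G n Sig SigL N) (q, th) mu \<noteq> None \<Longrightarrow> deltas (trans G) q (psi mu) \<noteq> None"
proof (induction mu arbitrary: q th)
  case Nil
  then show ?case by simp
next
  case (Cons e mu)
  then obtain q' th' where st: "comm_trans G n Sig SigL N (q, th) e = Some (q', th')"
    and r: "deltas (comm_trans G n Sig SigL N) (q', th') mu \<noteq> None"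
    by (auto split: option.splits)
  have ih: "deltas (trans G) q' (psi mu) \<noteq> None" using Cons.IH[OF r] .
  note c = ct_step[OF st]
  show ?case
  proof (cases e)
    case (PEv x)
    then show ?thesis using c ih by simp
  next
    case (Fdel i j s)
    then show ?thesis using c ih by simp
  next
    case (Gloss i j d)
    then show ?thesis using c ih by simp
  qed
qed

lemma flush:
  assumes S: "\<forall>i j. Sig i j \<noteq> {} \<longrightarrow> i < n \<and> j < n"
  shows "(\<Sum>i<n. \<Sum>j<n. length (th i j)) = m \<Longrightarrow> \<forall>i j. fst ` set (th i j) \<subseteq> Sig i j \<Longrightarrow>
    \<exists>mu. psi mu = [] \<and> deltas (comm_trans G n Sig SigL N) (q, th) mu = Some (q, \<lambda>i j. [])"
proof (induction m arbitrary: th rule: less_induct)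
  case (less m)
  show ?case
  proof (cases "\<exists>i<n. \<exists>j<n. th i j \<noteq> []")
    case False
    have "th = (\<lambda>i j. [])"
    proof (intro ext)
      fix i j
      show "th i j = []"
      proof (rule ccontr)
        assume ne: "th i j \<noteq> []"
        then obtain p where "p \<in> set (th i j)" by (cases "th i j") auto
        then have "fst p \<in> Sig i j" using less.prems(2) by blast
        then have "i < n \<and> j < n" using S by blast
        then show False using False ne by blast
      qed
    qed
    then show ?thesis by (intro exI[of _ "[]"]) simp
  next
    case True
    then obtain i j where ij: "i < n" "j < n" "th i j \<noteq> []" by blast
    define s where "s = fst (hd (th i j))"
    have sub: "fst ` set (th i j) \<subseteq> Sig i j" using less.prems(2) by simp
    have sS: "s \<in> Sig i j" using sub ij(3) unfolding s_def
      by (cases "th i j") auto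
    define th' where "th' = th(i := (th i)(j := tl (th i j)))"
    have step: "comm_trans G n Sig SigL N (q, th) (Fdel i j s) = Some (q, th')"
      using ij sS unfolding comm_trans_def OUT_def th'_def s_def by simp
    have tlsub: "set (tl (th i j)) \<subseteq> set (th i j)" by (cases "th i j") auto
    have inv': "\<forall>i j. fst ` set (th' i j) \<subseteq> Sig i j"
    proof (intro allI)
      fix a b
      have "set (th' a b) \<subseteq> set (th a b)"
        using tlsub unfolding th'_def by (cases "a = i"; cases "b = j") simp_all
      moreover have "fst ` set (th a b) \<subseteq> Sig a b" using less.prems(2) by simp
      ultimately show "fst ` set (th' a b) \<subseteq> Sig a b" by (meson image_mono order_trans)
    qed
    have le: "\<And>a b. length (th' a b) \<le> length (th a b)"
      unfolding th'_def by auto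
    have lt: "length (th' i j) < length (th i j)"
      unfolding th'_def using ij(3) by (cases "th i j") auto
    have inner: "(\<Sum>b<n. length (th' i b)) < (\<Sum>b<n. length (th i b))"
      by (rule sum_strict_mono_ex1) (use le lt ij in auto)
    have allle: "\<forall>a\<in>{..<n}. (\<Sum>b<n. length (th' a b)) \<le> (\<Sum>b<n. length (th a b))"
      using le by (simp add: sum_mono)
    have ex: "\<exists>a\<in>{..<n}. (\<Sum>b<n. length (th' a b)) < (\<Sum>b<n. length (th a b))"
      using inner ij(1) by blast
    have calc: "(\<Sum>a<n. \<Sum>b<n. length (th' a b)) < (\<Sum>a<n. \<Sum>b<n. length (th a b))"
      using sum_strict_mono_ex1[OF finite_lessThan allle ex] .
    have lessm: "(\<Sum>a<n. \<Sum>b<n. length (th' a b)) < m" using calc less.prems(1) by linarith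
    from less.IH[OF lessm refl inv'] obtain mu where mu: "psi mu = []"
      "deltas (comm_trans G n Sig SigL N) (q, th') mu = Some (q, \<lambda>i j. [])"
      by blast
    show ?thesis
      by (intro exI[of _ "Fdel i j s # mu"]) (simp add: step mu)
  qed
qed

lemma sup_dir:
  assumes S: "\<forall>i j. Sig i j \<noteq> {} \<longrightarrow> i < n \<and> j < n"
  shows "deltas (trans G) q s \<noteq> None \<Longrightarrow>
    \<exists>mu. psi mu = s \<and> deltas (comm_trans G n Sig SigL N) (q, \<lambda>i j. []) mu \<noteq> None"
proof (induction s arbitrary: q)
  case Nil
  then show ?case by (intro exI[of _ "[]"]) simp
next
  case (Cons e s)
  then obtain q' where q': "trans G q e = Some q'" "deltas (trans G) q' s \<noteq> None"
    by (auto split: option.splits)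
  then obtain mu where mu: "psi mu = s" "deltas (comm_trans G n Sig SigL N) (q', \<lambda>i j. []) mu \<noteq> None"
    using Cons.IH by blast
  show ?case
  proof (cases e)
    case Tick
    have "TIME n N (\<lambda>i j. []) = Some (\<lambda>i j. [])"
      by (simp add: TIME_def MAXage_def incr_def)
    then have "comm_trans G n Sig SigL N (q, \<lambda>i j. []) (PEv Tick) = Some (q', \<lambda>i j. [])"
      using q' Tick by (simp add: comm_trans_def TIME_def MAXage_def incr_def)
    then show ?thesis using mu Tick
      by (intro exI[of _ "PEv Tick # mu"]) simp
  next
    case (Ev x)
    have st: "comm_trans G n Sig SigL N (q, \<lambda>i j. []) (PEv (Ev x)) = Some (q', IN Sig (\<lambda>i j. []) x)"
      using q' Ev by (simp add: comm_trans_def)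
    have "\<forall>i j. fst ` set (IN Sig (\<lambda>i j. []) x i j) \<subseteq> Sig i j"
      by (auto simp: IN_def)
    then obtain mf where mf: "psi mf = []"
      "deltas (comm_trans G n Sig SigL N) (q', IN Sig (\<lambda>i j. []) x) mf = Some (q', \<lambda>i j. [])"
      using flush[OF S refl, where G=G and q=q' and SigL=SigL and N=N and th="IN Sig (\<lambda>i j. []) x"] by blast
    show ?thesis using mu mf st Ev
      by (intro exI[of _ "PEv (Ev x) # mf @ mu"]) (simp add: deltas_append psi_append)
  qed
qed


theorem proposition1:
  fixes n :: nat and Gs :: "nat \<Rightarrow> ('q, 'a) ta" and Sfor :: "'a set"
    and So :: "nat \<Rightarrow> 'a tevent set" and COM :: "nat \<Rightarrow> nat \<Rightarrow> bool"
    and Sig SigL :: "nat \<Rightarrow> nat \<Rightarrow> 'a set" and N :: "nat \<Rightarrow> nat \<Rightarrow> nat"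
  assumes "networked_tdes n Gs Sfor So COM Sig SigL N"
  shows "psi ` comm_lang (par n Gs) n Sig SigL N = lang (par n Gs)"
proof
  have S: "\<forall>i j. Sig i j \<noteq> {} \<longrightarrow> i < n \<and> j < n"
  proof (intro allI impI)
    fix i j assume ne: "Sig i j \<noteq> {}"
    have c1: "\<forall>i j. COM i j \<longrightarrow> i < n \<and> j < n" and c2: "\<forall>i j. \<not> COM i j \<longrightarrow> Sig i j = {}"
      using assms unfolding networked_tdes_def by simp_all
    show "i < n \<and> j < n" using c1 c2 ne by metis
  qed
  show "psi ` comm_lang (par n Gs) n Sig SigL N \<subseteq> lang (par n Gs)"
  proof
    fix s assume "s \<in> psi ` comm_lang (par n Gs) n Sig SigL N"
    then obtain mu where "s = psi mu"
      "deltas (comm_trans (par n Gs) n Sig SigL N) (init (par n Gs), \<lambda>i j. []) mu \<noteq> None"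
      unfolding comm_lang_def comm_init_def by blast
    then show "s \<in> lang (par n Gs)"
      using sub_dir[of "par n Gs" n Sig SigL N "init (par n Gs)" "\<lambda>i j. []" mu] unfolding lang_def by simp
  qed
  show "lang (par n Gs) \<subseteq> psi ` comm_lang (par n Gs) n Sig SigL N"
  proof
    fix s assume "s \<in> lang (par n Gs)"
    then obtain mu where "psi mu = s"
      "deltas (comm_trans (par n Gs) n Sig SigL N) (init (par n Gs), \<lambda>i j. []) mu \<noteq> None"
      using sup_dir[OF S, of "par n Gs" "init (par n Gs)" s SigL N] unfolding lang_def by auto
    then show "s \<in> psi ` comm_lang (par n Gs) n Sig SigL N"
      unfolding comm_lang_def comm_init_def by blast
  qed
qed

end
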